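(* Let $n\ge 1$, $0<m\le L$, $\kappa=L/m$, and let $(\alpha,\beta,\gamma)$ be constant parameters such that the two-step momentum algorithm converges linearly with rate $\rho=1-1/T_s\in(0,1)$ for all $f\in\mathcal{Q}_m^L$. Then for every $f\in\mathcal{Q}_m^L$ the noise amplification satisfies $$J\;\le\;\frac{\sigma_w^2(1+\rho^2)}{(1+\rho)^3}\,n\,T_s^3 .$$ Furthermore, for the gradient noise model ($\sigma_w=\alpha\sigma$), $$J\;\le\;\frac{\sigma^2(1+\rho)(1+\rho^2)}{L^2}\,n\,T_s^3 .$$
   Context: $\mathcal{Q}_m^L$ is the class of quadratic functions $f(x)=\tfrac12x^TQx-q^Tx$ on $\mathbb{R}^n$ with $q\in\mathbb{R}^n$, $Q=Q^T\succ0$ whose largest eigenvalue is $L$ and smallest is $m$; $x^\star$ is the minimizer. The noisy two-step momentum algorithm with constant parameters $(\alpha,\beta,\gamma)$ is $x^{t+2}=x^{t+1}+\beta(x^{t+1}-x^t)-\alpha\nabla f\big(x^{t+1}+\gamma(x^{t+1}-x^t)\big)+\sigma_w w^t$, where $w^t$ is white noise with $\mathbb{E}[w^t]=0$, $\mathbb{E}[w^t(w^\tau)^T]=I\,\delta(t-\tau)$ ($\delta$ the Kronecker delta). In the iterate noise model $\sigma_w=\sigma$, in the gradient noise model $\sigma_w=\alpha\sigma$, with $\sigma>0$. With $\psi^t=[(x^t-x^\star)^T,(x^{t+1}-x^\star)^T]^T$ one has $\psi^{t+1}=A\psi^t+Bw^t$, $A=\begin{bmatrix}0&I\\-\beta I+\gamma\alpha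 Q&(1+\beta)I-(1+\gamma)\alpha Q\end{bmatrix}$, $B^T=[0\;\;\sigma_wI]$. The algorithm converges linearly with rate $\rho$ for all $f\in\mathcal{Q}_m^L$ if the spectral radius of $A$ is at most $\rho$ for every $f\in\mathcal{Q}_m^L$ (the spectral radius of $A$ is the best achievable linear rate in the noiseless case). The settling time is $T_s=1/(1-\rho)$. The noise amplification is $J=\lim_{t\to\infty}\frac1t\sum_{k=0}^t\mathbb{E}\|x^k-x^\star\|_2^2$. *)

theory Defs
  imports "HOL-Probability.Probability"
begin

definition real_eigenvalue :: "real^'n^'n \<Rightarrow> real \<Rightarrow> bool" where
  "real_eigenvalue Q l \<longleftrightarrow> (\<exists>v. v \<noteq> 0 \<and> Q *v v = l *s v)"

definition cplx_eigenvalue :: "complex^'k^'k \<Rightarrow> complex \<Rightarrow> bool" where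
  "cplx_eigenvalue A c \<longleftrightarrow> (\<exists>v. v \<noteq> 0 \<and> A *v v = c *s v)"

definition spectral_rad :: "complex^'k^'k \<Rightarrow> real" where
  "spectral_rad A = Sup {cmod c | c. cplx_eigenvalue A c}"

definition in_QmL :: "real \<Rightarrow> real \<Rightarrow> real^'n^'n \<Rightarrow> bool" where
  "in_QmL m L Q \<longleftrightarrow> transpose Q = Q \<and> (\<forall>x. x \<noteq> 0 \<longrightarrow> x \<bullet> (Q *v x) > 0) \<and>
     real_eigenvalue Q L \<and> (\<forall>l. real_eigenvalue Q l \<longrightarrow> l \<le> L) \<and>
     real_eigenvalue Q m \<and> (\<forall>l. real_eigenvalue Q l \<longrightarrow> m \<le> l)"

definition quad_f :: "real^'n^'n \<Rightarrow> real^'n \<Rightarrow> real^'n \<Rightarrow> real" where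
  "quad_f Q q x = (1/2) * (x \<bullet> (Q *v x)) - q \<bullet> x"

text \<open>The 2n x 2n state matrix A of the two-step momentum method (complexified so that its
  spectral radius can be taken); the first block (Inl) is x^t, the second (Inr) is x^(t+1).\<close>
definition momA :: "real \<Rightarrow> real \<Rightarrow> real \<Rightarrow> real^'n^'n \<Rightarrow> complex^('n + 'n)^('n + 'n)" where
  "momA \<alpha> \<beta> \<gamma> Q = (\<chi> i j. case (i, j) of
      (Inl a, Inl b) \<Rightarrow> 0
    | (Inl a, Inr b) \<Rightarrow> (if a = b then 1 else 0)
    | (Inr a, Inl b) \<Rightarrow> complex_of_real (- \<beta> * (if a = b then 1 else 0) + \<gamma> * \<alpha> * Q $ a $ b)
    | (Inr a, Inr b) \<Rightarrow> complex_of_real ((1 + \<beta>) * (if a = b then 1 else 0) - (1 + \<gamma>) * \<alpha> * Q $ a $ b))"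

definition noise_amplification :: "'w measure \<Rightarrow> (nat \<Rightarrow> 'w \<Rightarrow> real^'n) \<Rightarrow> real^'n \<Rightarrow> real" where
  "noise_amplification M x xs =
     lim (\<lambda>t. (1 / real t) * (\<Sum>k\<le>t. integral\<^sup>L M (\<lambda>\<omega>. (norm (x k \<omega> - xs))\<^sup>2)))"

end

theory Submission
  imports Defs
begin

definition WL :: "real \<Rightarrow> real \<Rightarrow> real \<Rightarrow> real \<Rightarrow> real" where
  "WL c d a b = ((1-d)*((1+d)^2-c^2) + d^2*(1+d)) * a^2 - 2*c*d*a*b + (1+d)*b^2"

lemma WL_step: "WL c d b (c*b - d*a) = WL c d a b - (1-d)*((1+d)^2-c^2) * a^2"
  unfolding WL_def by (simp add: algebra_simps power2_eq_square)

lemma WL_nonneg: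
  assumes "1 + d > 0" "1 - d > 0" "(1+d)^2 - c^2 \<ge> 0"
  shows "WL c d a b \<ge> 0"
proof -
  have e: "(1+d) * WL c d a b = ((1+d)*b - c*d*a)^2 + ((1+d)*((1-d)*((1+d)^2-c^2)) + d^2*((1+d)^2-c^2)) * a^2"
    unfolding WL_def by (simp add: algebra_simps power2_eq_square)
  have "0 \<le> ((1+d)*b - c*d*a)^2 + ((1+d)*((1-d)*((1+d)^2-c^2)) + d^2*((1+d)^2-c^2)) * a^2"
  proof -
    have "0 \<le> (1+d)*((1-d)*((1+d)^2-c^2))" using assms by simp
    moreover have "0 \<le> d^2*((1+d)^2-c^2)" using assms by simp
    ultimately show ?thesis by (intro add_nonneg_nonneg) (simp_all add: zero_le_power2)
  qed
  then have "0 \<le> (1+d) * WL c d a b" using e by simp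
  then show ?thesis using assms(1) by (simp add: zero_le_mult_iff)
qed

lemma WL_sum:
  fixes y :: "nat \<Rightarrow> real"
  assumes rec: "\<And>t. y (t+2) = c*y(t+1) - d*y t"
  shows "(1-d)*((1+d)^2-c^2) * (\<Sum>t<N. (y t)^2) + WL c d (y N) (y (N+1)) = WL c d (y 0) (y 1)"
proof (induction N)
  case 0 then show ?case by simp
next
  case (Suc N)
  have r: "y (Suc N + 1) = c * y (N+1) - d * y N" using rec[of N] by (simp add: numeral_2_eq_2)
  have "WL c d (y (Suc N)) (y (Suc N + 1)) = WL c d (y N) (y (N+1)) - (1-d)*((1+d)^2-c^2) * (y N)^2"
    unfolding r using WL_step[of c d "y (N+1)" "y N"] by simp
  then show ?case using Suc by (simp add: algebra_simps)
qed

lemma lyap_bound: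
  fixes y :: "nat \<Rightarrow> real"
  assumes rec: "\<And>t. y (t+2) = c*y(t+1) - d*y t"
    and "1 + d > 0" "1 - d > 0" "(1+d)^2 - c^2 > 0"
  shows "(\<Sum>t<N. (y t)^2) \<le> WL c d (y 0) (y 1) / ((1-d)*((1+d)^2-c^2))"
proof -
  have D: "(1-d)*((1+d)^2-c^2) > 0" using assms by simp
  have "(1-d)*((1+d)^2-c^2) * (\<Sum>t<N. (y t)^2) \<le> WL c d (y 0) (y 1)"
    using WL_sum[OF rec, of N] WL_nonneg[of d c "y N" "y (N+1)"] assms by linarith
  then show ?thesis using D by (simp add: field_simps)
qed

lemma lyap_summable:
  fixes y :: "nat \<Rightarrow> real"
  assumes rec: "\<And>t. y (t+2) = c*y(t+1) - d*y t"
    and "1 + d > 0" "1 - d > 0" "(1+d)^2 - c^2 > 0"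
  shows "summable (\<lambda>t. (y t)^2)" "(\<Sum>t. (y t)^2) \<le> WL c d (y 0) (y 1) / ((1-d)*((1+d)^2-c^2))"
proof -
  show s: "summable (\<lambda>t. (y t)^2)"
    by (rule summableI_nonneg_bounded[where x="WL c d (y 0) (y 1) / ((1-d)*((1+d)^2-c^2))"])
       (use lyap_bound[OF rec assms(2-4)] in auto)
  show "(\<Sum>t. (y t)^2) \<le> WL c d (y 0) (y 1) / ((1-d)*((1+d)^2-c^2))"
    using suminf_le_const[OF s] lyap_bound[OF rec assms(2-4)] by blast
qed

lemma quad_trick:
  fixes a K :: real
  assumes "\<And>t. 2*t*a + t^2*K \<le> 0"
  shows "a = 0"
proof -
  define t where "t = a/(\<bar>K\<bar>+1)"
  have pos: "\<bar>K\<bar>+1 > 0" by simp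
  have "2*t*a + t^2*K \<le> 0" by (rule assms)
  then have "(\<bar>K\<bar>+1)^2 * (2*t*a + t^2*K) \<le> 0" using pos
    by (simp add: mult_nonneg_nonpos)
  moreover have st: "(\<bar>K\<bar>+1) * t = a" unfolding t_def using pos by simp
  moreover have "(\<bar>K\<bar>+1)^2 * (2*t*a + t^2*K) = 2*(\<bar>K\<bar>+1)*((\<bar>K\<bar>+1) * t)*a + ((\<bar>K\<bar>+1) * t)^2*K"
    by (simp add: algebra_simps power2_eq_square)
  ultimately have "a^2 * (2*(\<bar>K\<bar>+1) + K) \<le> 0" by (simp add: algebra_simps power2_eq_square)
  moreover have "2*(\<bar>K\<bar>+1) + K > 0" by (cases "K \<ge> 0") auto
  ultimately have "a^2 \<le> 0" by (simp add: mult_le_0_iff)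
  then show ?thesis by simp
qed

lemma root_constraints:
  fixes c d \<rho> :: real
  assumes rp: "\<rho> > 0" and R: "\<And>z::complex. z^2 - of_real c * z + of_real d = 0 \<Longrightarrow> cmod z \<le> \<rho>"
  shows "\<bar>d\<bar> \<le> \<rho>^2 \<and> \<rho>*\<bar>c\<bar> \<le> \<rho>^2 + d"
proof (cases "c^2 - 4*d \<ge> 0")
  case True
  define s where "s = sqrt (c^2 - 4*d)"
  have s2: "s^2 = c^2 - 4*d" unfolding s_def using True by simp
  define z1 where "z1 = (c+s)/2"
  define z2 where "z2 = (c-s)/2"
  have "(complex_of_real z1)^2 - of_real c * of_real z1 + of_real d = of_real (z1^2 - c*z1 + d)" by simp
  also have "z1^2 - c*z1 + d = (s^2 - c^2)/4 + d" unfolding z1_def by (simp add: field_simps power2_eq_square)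
  also have "(s^2 - c^2)/4 + d = 0" using s2 by simp
  finally have a1: "\<bar>z1\<bar> \<le> \<rho>" using R[of "of_real z1"] by simp
  have "(complex_of_real z2)^2 - of_real c * of_real z2 + of_real d = of_real (z2^2 - c*z2 + d)" by simp
  also have "z2^2 - c*z2 + d = (s^2 - c^2)/4 + d" unfolding z2_def by (simp add: field_simps power2_eq_square)
  also have "(s^2 - c^2)/4 + d = 0" using s2 by simp
  finally have a2: "\<bar>z2\<bar> \<le> \<rho>" using R[of "of_real z2"] by simp
  have "z1*z2 = (c^2 - s^2)/4" unfolding z1_def z2_def by (simp add: field_simps power2_eq_square)
  then have dd: "d = z1*z2" using s2 by simp
  have cc: "c = z1 + z2" unfolding z1_def z2_def by (simp add: field_simps)
  have "\<bar>d\<bar> \<le> \<rho> * \<rho>" unfolding dd abs_mult using a1 a2 by (intro mult_mono) auto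
  moreover have "0 \<le> (\<rho>-z1)*(\<rho>-z2)" using a1 a2 by (intro mult_nonneg_nonneg) auto
  moreover have "0 \<le> (\<rho>+z1)*(\<rho>+z2)" using a1 a2 by (intro mult_nonneg_nonneg) auto
  moreover have "(\<rho>-z1)*(\<rho>-z2) = \<rho>^2 + d - \<rho>*c" unfolding dd cc by (simp add: power2_eq_square algebra_simps)
  moreover have "(\<rho>+z1)*(\<rho>+z2) = \<rho>^2 + d + \<rho>*c" unfolding dd cc by (simp add: power2_eq_square algebra_simps)
  moreover have "\<rho>*\<bar>c\<bar> = \<rho>*c \<or> \<rho>*\<bar>c\<bar> = -(\<rho>*c)" by (cases "c \<ge> 0") auto
  moreover have "\<rho> * \<rho> = \<rho>^2" by (simp add: power2_eq_square)
  ultimately show ?thesis by linarith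
next
  case False
  define s where "s = sqrt (4*d - c^2)"
  have s2: "s^2 = 4*d - c^2" unfolding s_def using False by simp
  define z where "z = Complex (c/2) (s/2)"
  have "z^2 - of_real c * z + of_real d = Complex ((c/2)*(c/2) - (s/2)*(s/2) - c*(c/2) + d) ((c/2)*(s/2) + (s/2)*(c/2) - c*(s/2))"
    unfolding z_def by (simp add: complex_eq_iff power2_eq_square)
  also have "\<dots> = 0" using s2 by (simp add: complex_eq_iff power2_eq_square field_simps)
  finally have "z^2 - of_real c * z + of_real d = 0" .
  then have "cmod z \<le> \<rho>" by (rule R)
  moreover have "(cmod z)^2 = (c^2 + s^2)/4" unfolding z_def cmod_power2 by (simp add: power2_eq_square field_simps)
  moreover have "(c^2 + s^2)/4 = d" using s2 by simp
  ultimately have d1: "d \<le> \<rho>^2" using power_mono[of "cmod z" \<rho> 2] by (simp del: cmod_power2)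
  have d0: "c^2 < 4*d" using False by simp
  then have "d \<ge> 0" using zero_le_power2[of c] by linarith
  have "(\<rho>*\<bar>c\<bar>)^2 \<le> (\<rho>^2 + d)^2"
  proof -
    have "(\<rho>*\<bar>c\<bar>)^2 = \<rho>^2 * c^2" by (simp add: power_mult_distrib)
    also have "\<dots> \<le> \<rho>^2 * (4*d)" using d0 by (intro mult_left_mono) auto
    also have "\<dots> \<le> (\<rho>^2 + d)^2" proof -
      have "(\<rho>^2 + d)^2 - \<rho>^2 * (4*d) = (\<rho>^2 - d)^2" by (simp add: power2_eq_square algebra_simps)
      then show ?thesis using zero_le_power2[of "\<rho>^2 - d"] by linarith
    qed
    finally show ?thesis .
  qed
  moreover have "0 \<le> \<rho>^2 + d" using \<open>d \<ge> 0\<close> by simp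
  ultimately have "\<rho>*\<bar>c\<bar> \<le> \<rho>^2 + d" by (rule power2_le_imp_le)
  then show ?thesis using d1 \<open>d \<ge> 0\<close> by simp
qed

lemma cd_bounds:
  fixes c d \<rho> :: real
  assumes r: "0 < \<rho>" "\<rho> < 1" and h1: "\<bar>d\<bar> \<le> \<rho>^2" and h2: "\<rho>*\<bar>c\<bar> \<le> \<rho>^2 + d"
  shows "1 + d > 0" "1 - d > 0" "(1+d)^2 - c^2 \<ge> (1-\<rho>^2)^2" "(1+d)^2 - c^2 > 0"
    "(1+d)/((1-d)*((1+d)^2-c^2)) \<le> (1+\<rho>^2)/(1-\<rho>^2)^3"
    "0 \<le> 1 - c + d" "1 - c + d \<le> (1+\<rho>)^2"
proof -
  have r2: "\<rho>^2 < 1" using r by (simp add: power_less_one_iff)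
  have r2': "\<rho>^2 < \<rho>" using r by (simp add: power2_eq_square)
  show g1: "1 + d > 0" "1 - d > 0" using h1 r2 by auto
  have c2: "\<rho>^2*c^2 \<le> (\<rho>^2 + d)^2"
  proof -
    have "\<rho>^2*c^2 = (\<rho>*\<bar>c\<bar>)^2" by (simp add: power_mult_distrib)
    also have "\<dots> \<le> (\<rho>^2 + d)^2" using h2 r by (intro power_mono) auto
    finally show ?thesis .
  qed
  have d2: "d^2 \<le> \<rho>^4"
  proof -
    have "d^2 = \<bar>d\<bar>^2" by simp
    also have "\<dots> \<le> (\<rho>^2)^2" using h1 by (intro power_mono) auto
    finally show ?thesis by simp
  qed
  have "\<rho>^2 * ((1+d)^2 - c^2) \<ge> \<rho>^2*(1+d)^2 - (\<rho>^2 + d)^2" using c2 by (simp add: algebra_simps)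
  moreover have "\<rho>^2*(1+d)^2 - (\<rho>^2 + d)^2 = (1-\<rho>^2)*(\<rho>^2-d^2)"
    by (simp add: algebra_simps power2_eq_square)
  moreover have "(1-\<rho>^2)*(\<rho>^2-d^2) \<ge> (1-\<rho>^2)*(\<rho>^2-\<rho>^4)" using r2 d2 by (intro mult_left_mono) auto
  moreover have "(1-\<rho>^2)*(\<rho>^2-\<rho>^4) = \<rho>^2 * (1-\<rho>^2)^2" by (simp add: algebra_simps power2_eq_square power4_eq_xxxx)
  ultimately have "\<rho>^2 * ((1+d)^2 - c^2) \<ge> \<rho>^2 * (1-\<rho>^2)^2" by linarith
  then show g3: "(1+d)^2 - c^2 \<ge> (1-\<rho>^2)^2" using r by (simp add: mult_le_cancel_left)
  have p: "(1-\<rho>^2)^2 > 0" using r2 by simp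
  then show g4: "(1+d)^2 - c^2 > 0" using g3 by linarith
  have "(1+d)/((1-d)*((1+d)^2-c^2)) \<le> (1+d)/((1-d)*(1-\<rho>^2)^2)"
  proof (rule divide_left_mono)
    show "(1-d)*(1-\<rho>^2)^2 \<le> (1-d)*((1+d)^2-c^2)" using g1 g3 by (intro mult_left_mono) auto
    show "0 \<le> 1 + d" using g1 by simp
    show "0 < (1-d)*((1+d)^2-c^2) * ((1-d)*(1-\<rho>^2)^2)" using g1 g4 p by simp
  qed
  also have "\<dots> = ((1+d)/(1-d)) / (1-\<rho>^2)^2" by simp
  also have "\<dots> \<le> ((1+\<rho>^2)/(1-\<rho>^2)) / (1-\<rho>^2)^2"
  proof (intro divide_right_mono)
    show "(1+d)/(1-d) \<le> (1+\<rho>^2)/(1-\<rho>^2)"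
    proof -
      have dl: "d \<le> \<rho>^2" using h1 by simp
      have "(1+d)*(1-\<rho>^2) \<le> (1+\<rho>^2)*(1-d)" using dl by (simp add: algebra_simps)
      moreover have "1 - d > 0" "1 - \<rho>^2 > 0" using g1 r2 by auto
      ultimately show ?thesis by (simp add: divide_simps)
    qed
  qed simp
  also have "\<dots> = (1+\<rho>^2)/(1-\<rho>^2)^3" by (simp add: power_Suc field_simps eval_nat_numeral)
  finally show "(1+d)/((1-d)*((1+d)^2-c^2)) \<le> (1+\<rho>^2)/(1-\<rho>^2)^3" .
  have ca: "\<bar>c\<bar> \<le> \<rho> + d/\<rho>" using h2 r by (simp add: field_simps power2_eq_square)
  have "d/\<rho> \<le> \<rho>" using h1 r by (simp add: field_simps power2_eq_square)
  moreover have "1 + d - \<rho> - d/\<rho> = (1-\<rho>)*(\<rho>-d)/\<rho>" using r by (simp add: field_simps)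
  moreover have "(1-\<rho>)*(\<rho>-d)/\<rho> \<ge> 0" using r h1 r2' by (intro divide_nonneg_pos mult_nonneg_nonneg) auto
  moreover have "c \<le> \<bar>c\<bar>" "-c \<le> \<bar>c\<bar>" by auto
  moreover have "d \<le> \<rho>^2" using h1 by simp
  moreover have "(1+\<rho>)^2 = 1 + 2*\<rho> + \<rho>^2" by (simp add: power2_eq_square algebra_simps)
  ultimately show "0 \<le> 1 - c + d" "1 - c + d \<le> (1+\<rho>)^2" using ca by linarith+
qed

lemma sym_inner:
  fixes Q :: "real^'n^'n"
  assumes "transpose Q = Q"
  shows "x \<bullet> (Q *v y) = (Q *v x) \<bullet> y"
proof -
  have "x \<bullet> (Q *v y) = (x v* Q) \<bullet> y" by (simp add: dot_lmul_matrix)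
  also have "x v* Q = transpose Q *v x" by simp
  finally show ?thesis using assms by simp
qed

lemma sym_eig_in_subspace:
  fixes Q :: "real^'n^'n"
  assumes sym: "transpose Q = Q" and S: "subspace S" "S \<noteq> {0}" and inv: "\<forall>x\<in>S. Q *v x \<in> S"
  obtains v where "v \<in> S" "norm v = 1" "Q *v v = (v \<bullet> (Q *v v)) *\<^sub>R v"
proof -
  define K where "K = S \<inter> sphere 0 1"
  have cK: "compact K" unfolding K_def using closed_subspace[OF S(1)] by (metis Int_commute compact_Int_closed compact_sphere)
  obtain x where x: "x \<in> S" "x \<noteq> 0" using S(2) subspace_0[OF S(1)] by blast
  have "x /\<^sub>R norm x \<in> K" unfolding K_def using x S(1) by (simp add: subspace_scale)
  then have neK: "K \<noteq> {}" by blast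
  have cont: "continuous_on K (\<lambda>x. x \<bullet> (Q *v x))" by (intro continuous_intros)
  obtain v where v: "v \<in> K" and vmax: "\<And>y. y \<in> K \<Longrightarrow> y \<bullet> (Q *v y) \<le> v \<bullet> (Q *v v)"
    using continuous_attains_sup[OF cK neK cont] by blast
  define \<mu> where "\<mu> = v \<bullet> (Q *v v)"
  have vS: "v \<in> S" and nv: "norm v = 1" using v unfolding K_def by auto
  have vv: "v \<bullet> v = 1" using nv by (simp add: dot_square_norm)
  have gen: "y \<bullet> (Q *v y) \<le> \<mu> * (y \<bullet> y)" if "y \<in> S" for y
  proof (cases "y = 0")
    case True then show ?thesis by simp
  next
    case False
    define u where "u = y /\<^sub>R norm y"
    have "u \<in> K" unfolding K_def u_def using that False S(1) by (simp add: subspace_scale)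
    then have "u \<bullet> (Q *v u) \<le> \<mu>" using vmax unfolding \<mu>_def by blast
    moreover have "u \<bullet> (Q *v u) = (y \<bullet> (Q *v y)) / (norm y)^2"
      unfolding u_def by (simp add: matrix_vector_mult_scaleR power2_eq_square field_simps)
    moreover have "y \<bullet> y = (norm y)^2" by (simp add: dot_square_norm)
    moreover have "(norm y)^2 > 0" using False by simp
    ultimately show ?thesis by (simp add: field_simps)
  qed
  have orth: "w \<bullet> (Q *v v) = 0" if w: "w \<in> S" "w \<bullet> v = 0" for w
  proof (rule quad_trick)
    fix t :: real
    have "(v + t *\<^sub>R w) \<in> S" using vS w S(1) by (simp add: subspace_add subspace_scale)
    then have g: "(v + t *\<^sub>R w) \<bullet> (Q *v (v + t *\<^sub>R w)) \<le> \<mu> * ((v + t *\<^sub>R w) \<bullet> (v + t *\<^sub>R w))"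
      by (rule gen)
    have A: "(v + t *\<^sub>R w) \<bullet> (Q *v (v + t *\<^sub>R w)) = \<mu> + 2*t*(w \<bullet> (Q *v v)) + t^2 * (w \<bullet> (Q *v w))"
    proof -
      have "v \<bullet> (Q *v w) = w \<bullet> (Q *v v)" using sym_inner[OF sym, of v w] by (simp add: inner_commute)
      then show ?thesis unfolding \<mu>_def
        by (simp add: matrix_vector_right_distrib matrix_vector_mult_scaleR inner_add_left inner_add_right
            power2_eq_square algebra_simps)
    qed
    have B: "(v + t *\<^sub>R w) \<bullet> (v + t *\<^sub>R w) = 1 + t^2 * (w \<bullet> w)"
      using vv w(2) by (simp add: inner_add_left inner_add_right inner_commute power2_eq_square)
    from g have "\<mu> + 2*t*(w \<bullet> (Q *v v)) + t^2 * (w \<bullet> (Q *v w)) \<le> \<mu> * (1 + t^2 * (w \<bullet> w))"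
      by (simp only: A B)
    then show "2*t*(w \<bullet> (Q *v v)) + t^2 * (w \<bullet> (Q *v w) - \<mu> * (w \<bullet> w)) \<le> 0"
      by (simp add: algebra_simps)
  qed
  define u where "u = Q *v v - \<mu> *\<^sub>R v"
  have uS: "u \<in> S" unfolding u_def using inv vS S(1) by (simp add: subspace_diff subspace_scale)
  have "u \<bullet> v = (Q *v v) \<bullet> v - \<mu> * (v \<bullet> v)" unfolding u_def by (simp add: inner_diff_left)
  then have uv: "u \<bullet> v = 0" unfolding \<mu>_def using vv by (simp add: inner_commute)
  have "u \<bullet> u = u \<bullet> (Q *v v) - \<mu> * (u \<bullet> v)" unfolding u_def by (simp add: inner_diff_right)
  then have "u \<bullet> u = 0" using orth[OF uS uv] uv by simp
  then have "u = 0" by simp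
  then have "Q *v v = \<mu> *\<^sub>R v" unfolding u_def by simp
  then show ?thesis using that vS nv unfolding \<mu>_def by blast
qed

lemma sym_eigenbasis_sub:
  fixes Q :: "real^'n^'n"
  assumes sym: "transpose Q = Q"
  shows "subspace S \<Longrightarrow> (\<forall>x\<in>S. Q *v x \<in> S) \<Longrightarrow> \<exists>B. B \<subseteq> S \<and> pairwise orthogonal B \<and>
     (\<forall>b\<in>B. norm b = 1 \<and> Q *v b = (b \<bullet> (Q *v b)) *\<^sub>R b) \<and> S \<subseteq> span B"
proof (induction "dim S" arbitrary: S rule: less_induct)
  case less
  show ?case
  proof (cases "S = {0}")
    case True then show ?thesis by (intro exI[of _ "{}"]) (auto simp: pairwise_def)
  next
    case False
    obtain v where v: "v \<in> S" "norm v = 1" "Q *v v = (v \<bullet> (Q *v v)) *\<^sub>R v"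
      using sym_eig_in_subspace[OF sym less.prems(1) False less.prems(2)] by blast
    define S' where "S' = S \<inter> {x. v \<bullet> x = 0}"
    have sub': "subspace S'" unfolding S'_def
      by (intro subspace_inter less.prems(1)) (auto simp: subspace_def inner_add_right)
    have inv': "\<forall>x\<in>S'. Q *v x \<in> S'"
    proof
      fix x assume x: "x \<in> S'"
      have "v \<bullet> (Q *v x) = (Q *v v) \<bullet> x" by (rule sym_inner[OF sym])
      also have "\<dots> = (v \<bullet> (Q *v v)) * (v \<bullet> x)" by (subst v(3)) (simp only: inner_scaleR_left)
      also have "v \<bullet> x = 0" using x unfolding S'_def by simp
      finally have "v \<bullet> (Q *v x) = 0" by simp
      then show "Q *v x \<in> S'" using x less.prems(2) unfolding S'_def by blast
    qed
    have vv: "v \<bullet> v = 1" using v(2) by (simp add: dot_square_norm)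
    have "v \<notin> S'" unfolding S'_def using vv by simp
    then have "S' \<subset> S" unfolding S'_def using v(1) by blast
    moreover have e1: "span S' = S'" using sub' by simp
    moreover have e2: "span S = S" using less.prems(1) by simp
    ultimately have "span S' \<subset> span S" by (simp only: e1 e2)
    then have "dim S' < dim S" by (rule dim_psubset)
    then obtain B where B: "B \<subseteq> S'" "pairwise orthogonal B"
      "\<forall>b\<in>B. norm b = 1 \<and> Q *v b = (b \<bullet> (Q *v b)) *\<^sub>R b" "S' \<subseteq> span B"
      using less.hyps[OF _ sub' inv'] by blast
    show ?thesis
    proof (intro exI[of _ "insert v B"] conjI)
      show "insert v B \<subseteq> S" using B(1) v(1) unfolding S'_def by auto
      have "\<forall>b\<in>B. orthogonal v b \<and> orthogonal b v" using B(1) unfolding S'_def orthogonal_def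
        by (simp add: subset_iff inner_commute)
      then show "pairwise orthogonal (insert v B)" using B(2) by (simp add: pairwise_insert)
      show "\<forall>b\<in>insert v B. norm b = 1 \<and> Q *v b = (b \<bullet> (Q *v b)) *\<^sub>R b" using B(3) v by auto
      show "S \<subseteq> span (insert v B)"
      proof
        fix x assume x: "x \<in> S"
        have "x - (v \<bullet> x) *\<^sub>R v \<in> S" using x v(1) less.prems(1) by (simp add: subspace_diff subspace_scale)
        moreover have "v \<bullet> (x - (v \<bullet> x) *\<^sub>R v) = 0" using vv by (simp add: inner_diff_right)
        ultimately have "x - (v \<bullet> x) *\<^sub>R v \<in> S'" unfolding S'_def by simp
        then have "x - (v \<bullet> x) *\<^sub>R v \<in> span (insert v B)" using B(4) span_mono[of B "insert v B"] by blast
        moreover have "(v \<bullet> x) *\<^sub>R v \<in> span (insert v B)" by (simp add: span_base span_scale)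
        ultimately have "(x - (v \<bullet> x) *\<^sub>R v) + (v \<bullet> x) *\<^sub>R v \<in> span (insert v B)" by (rule span_add)
        then show "x \<in> span (insert v B)" by simp
      qed
    qed
  qed
qed

lemma sym_eigenbasis:
  fixes Q :: "real^'n^'n"
  assumes sym: "transpose Q = Q"
  obtains B where "finite B" "card B \<le> CARD('n)" "pairwise orthogonal B"
     "\<And>b. b \<in> B \<Longrightarrow> norm b = 1" "\<And>b. b \<in> B \<Longrightarrow> Q *v b = (b \<bullet> (Q *v b)) *\<^sub>R b"
     "\<And>x. (\<Sum>b\<in>B. (x \<bullet> b) *\<^sub>R b) = x"
proof -
  obtain B where B: "pairwise orthogonal B" "\<forall>b\<in>B. norm b = 1 \<and> Q *v b = (b \<bullet> (Q *v b)) *\<^sub>R b"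
     "UNIV \<subseteq> span B"
    using sym_eigenbasis_sub[OF sym, of UNIV] by auto
  have "0 \<notin> B" using B(2) by force
  then have ind: "independent B" using B(1) pairwise_orthogonal_independent by blast
  then have fc: "finite B" "card B \<le> CARD('n)" using independent_bound[OF ind] by auto
  show ?thesis
  proof (rule that[OF fc B(1)])
    show "\<And>b. b \<in> B \<Longrightarrow> norm b = 1" "\<And>b. b \<in> B \<Longrightarrow> Q *v b = (b \<bullet> (Q *v b)) *\<^sub>R b" using B(2) by auto
    show "\<And>x. (\<Sum>b\<in>B. (x \<bullet> b) *\<^sub>R b) = x"
      by (rule orthonormal_basis_expand) (use B fc in auto)
  qed
qed

lemma quad_min_grad:
  fixes Q :: "real^'n^'n"
  assumes sym: "transpose Q = Q" and mn: "\<forall>y. quad_f Q q xs \<le> quad_f Q q y"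
  shows "Q *v xs = q"
proof -
  define g where "g = Q *v xs - q"
  have "g \<bullet> g = 0"
  proof -
    have "-(g \<bullet> g)/2 = 0"
    proof (rule quad_trick)
      fix t :: real
      have "quad_f Q q xs \<le> quad_f Q q (xs + t *\<^sub>R g)" using mn by blast
      moreover have "quad_f Q q (xs + t *\<^sub>R g) = quad_f Q q xs + t * (g \<bullet> g) + t^2/2 * (g \<bullet> (Q *v g))"
      proof -
        have "xs \<bullet> (Q *v g) = g \<bullet> (Q *v xs)" using sym_inner[OF sym, of xs g] by (simp add: inner_commute)
        then have "quad_f Q q (xs + t *\<^sub>R g) = quad_f Q q xs + t * (g \<bullet> (Q *v xs) - q \<bullet> g) + t^2/2 * (g \<bullet> (Q *v g))"
          unfolding quad_f_def
          by (simp add: matrix_vector_right_distrib matrix_vector_mult_scaleR inner_add_left inner_add_right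
             power2_eq_square algebra_simps inner_commute)
        moreover have "g \<bullet> (Q *v xs) - q \<bullet> g = g \<bullet> g" unfolding g_def by (simp add: inner_diff_right inner_commute)
        ultimately show ?thesis by simp
      qed
      ultimately show "2 * t * (-(g \<bullet> g)/2) + t^2 * (-(g \<bullet> (Q *v g))/2) \<le> 0"
        by (simp add: algebra_simps)
    qed
    then show ?thesis by simp
  qed
  then show ?thesis unfolding g_def by simp
qed

lemma norm_cvec_smult:
  fixes v :: "complex^'k"
  shows "norm (z *s v) = cmod z * norm v"
  unfolding norm_vec_def by (simp add: L2_set_right_distrib norm_mult)

lemma spectral_rad_ge:
  fixes A :: "complex^'k^'k"
  assumes "cplx_eigenvalue A z"
  shows "cmod z \<le> spectral_rad A"
proof -
  obtain K where K: "\<And>x. norm (A *v x) \<le> norm x * K"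
    using bounded_linear.bounded[OF matrix_vector_mul_bounded_linear[of A]] by blast
  have "bdd_above {cmod c | c. cplx_eigenvalue A c}"
  proof (rule bdd_aboveI)
    fix r assume "r \<in> {cmod c | c. cplx_eigenvalue A c}"
    then obtain c v where r: "r = cmod c" "v \<noteq> 0" "A *v v = c *s v" unfolding cplx_eigenvalue_def by blast
    have "cmod c * norm v \<le> K * norm v" using K[of v] r by (simp add: norm_cvec_smult mult.commute)
    then show "r \<le> K" using r by simp
  qed
  then show ?thesis unfolding spectral_rad_def using assms by (intro cSup_upper) auto
qed

lemma ifmul: "(if P then 1 else 0) * (y::'a::semiring_1) = (if P then y else 0)" by simp

lemma eigen_to_A:
  fixes Q :: "real^'n^'n" and u :: "real^'n" and z :: complex
  assumes u: "u \<noteq> 0" "Q *v u = lam *\<^sub>R u"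
    and z: "z^2 - of_real (1 + \<beta> - (1+\<gamma>)*\<alpha>*lam) * z + of_real (\<beta> - \<gamma>*\<alpha>*lam) = 0"
  shows "cplx_eigenvalue (momA \<alpha> \<beta> \<gamma> Q) z"
proof -
  define V :: "complex^('n+'n)" where "V = (\<chi> i. case i of Inl a \<Rightarrow> of_real (u$a) | Inr a \<Rightarrow> z * of_real (u$a))"
  have Qu: "(\<Sum>b\<in>UNIV. Q$a$b * u$b) = lam * u$a" for a
    using arg_cong[OF u(2), of "\<lambda>x. x$a"] by (simp add: matrix_vector_mult_def)
  have "V \<noteq> 0"
  proof
    assume "V = 0"
    have "V $ Inl a = of_real (u$a)" for a unfolding V_def by simp
    then have "u$a = 0" for a using \<open>V = 0\<close> by (metis of_real_eq_0_iff zero_index)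
    then show False using u(1) by (simp add: vec_eq_iff)
  qed
  moreover have "momA \<alpha> \<beta> \<gamma> Q *v V = z *s V"
  proof -
    have "(momA \<alpha> \<beta> \<gamma> Q *v V) $ i = (z *s V) $ i" for i
    proof (cases i)
      case (Inl a)
      have "(momA \<alpha> \<beta> \<gamma> Q *v V) $ i = (\<Sum>j\<in>UNIV <+> UNIV. momA \<alpha> \<beta> \<gamma> Q $ i $ j * V $ j)"
        by (simp add: matrix_vector_mult_def)
      also have "\<dots> = z * of_real (u$a)"
        by (subst sum.Plus) (auto simp: Inl momA_def V_def ifmul)
      finally show ?thesis by (simp add: Inl V_def)
    next
      case (Inr a)
      have "(momA \<alpha> \<beta> \<gamma> Q *v V) $ i = (\<Sum>j\<in>UNIV <+> UNIV. momA \<alpha> \<beta> \<gamma> Q $ i $ j * V $ j)"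
        by (simp add: matrix_vector_mult_def)
      also have "\<dots> = (\<Sum>b\<in>UNIV. of_real ((- \<beta> * (if a = b then 1 else 0) + \<gamma> * \<alpha> * Q $ a $ b) * u$b))
           + z * (\<Sum>b\<in>UNIV. of_real (((1 + \<beta>) * (if a = b then 1 else 0) - (1 + \<gamma>) * \<alpha> * Q $ a $ b) * u$b))"
        by (subst sum.Plus) (auto simp: Inr momA_def V_def sum_distrib_left algebra_simps intro!: sum.cong)
      also have "\<dots> = of_real (\<Sum>b\<in>UNIV. (- \<beta> * (if a = b then 1 else 0) + \<gamma> * \<alpha> * Q $ a $ b) * u$b)
           + z * of_real (\<Sum>b\<in>UNIV. ((1 + \<beta>) * (if a = b then 1 else 0) - (1 + \<gamma>) * \<alpha> * Q $ a $ b) * u$b)"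
        by simp
      also have "(\<Sum>b\<in>UNIV. (- \<beta> * (if a = b then 1 else 0) + \<gamma> * \<alpha> * Q $ a $ b) * u$b) = - \<beta> * u$a + \<gamma>*\<alpha>*(lam*u$a)"
      proof -
        have "(\<Sum>b\<in>UNIV. (- \<beta> * (if a = b then 1 else 0) + \<gamma> * \<alpha> * Q $ a $ b) * u$b)
            = (\<Sum>b\<in>UNIV. (if a = b then - \<beta> * u$b else 0) + \<gamma> * \<alpha> * (Q $ a $ b * u$b))"
          by (rule sum.cong) (auto simp: algebra_simps)
        also have "\<dots> = - \<beta> * u$a + \<gamma>*\<alpha>*(lam*u$a)"
          by (simp add: sum.distrib sum_distrib_left[symmetric] Qu)
        finally show ?thesis .
      qed
      also have "(\<Sum>b\<in>UNIV. ((1 + \<beta>) * (if a = b then 1 else 0) - (1 + \<gamma>) * \<alpha> * Q $ a $ b) * u$b) = (1+\<beta>) * u$a - (1+\<gamma>)*\<alpha>*(lam*u$a)"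
      proof -
        have "(\<Sum>b\<in>UNIV. ((1 + \<beta>) * (if a = b then 1 else 0) - (1 + \<gamma>) * \<alpha> * Q $ a $ b) * u$b)
            = (\<Sum>b\<in>UNIV. (if a = b then (1 + \<beta>) * u$b else 0) - (1 + \<gamma>) * \<alpha> * (Q $ a $ b * u$b))"
          by (rule sum.cong) (auto simp: algebra_simps)
        also have "\<dots> = (1+\<beta>) * u$a - (1+\<gamma>)*\<alpha>*(lam*u$a)"
          by (simp add: sum_subtractf sum_distrib_left[symmetric] Qu)
        finally show ?thesis .
      qed
      finally have e: "(momA \<alpha> \<beta> \<gamma> Q *v V) $ i = of_real (- \<beta> * u$a + \<gamma>*\<alpha>*(lam*u$a)) + z * of_real ((1+\<beta>) * u$a - (1+\<gamma>)*\<alpha>*(lam*u$a))" .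
      have z2: "z^2 = of_real (1 + \<beta> - (1+\<gamma>)*\<alpha>*lam) * z - of_real (\<beta> - \<gamma>*\<alpha>*lam)" using z by (simp add: algebra_simps)
      have "(z *s V) $ i = z^2 * of_real (u$a)" by (simp add: Inr V_def power2_eq_square)
      also have "\<dots> = of_real (- \<beta> * u$a + \<gamma>*\<alpha>*(lam*u$a)) + z * of_real ((1+\<beta>) * u$a - (1+\<gamma>)*\<alpha>*(lam*u$a))"
        unfolding z2 by (simp add: algebra_simps)
      finally show ?thesis using e by simp
    qed
    then show ?thesis by (simp add: vec_eq_iff)
  qed
  ultimately show ?thesis unfolding cplx_eigenvalue_def by blast
qed

lemma eig_constraints:
  fixes Q :: "real^'n^'n" and u :: "real^'n"
  assumes u: "u \<noteq> 0" "Q *v u = lam *\<^sub>R u" and r: "0 < \<rho>" "\<rho> < 1"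
    and sr: "spectral_rad (momA \<alpha> \<beta> \<gamma> Q) \<le> \<rho>"
  defines "c \<equiv> 1 + \<beta> - (1+\<gamma>)*\<alpha>*lam" and "d \<equiv> \<beta> - \<gamma>*\<alpha>*lam"
  shows "1 + d > 0" "1 - d > 0" "(1+d)^2 - c^2 > 0"
    "(1+d)/((1-d)*((1+d)^2-c^2)) \<le> (1+\<rho>^2)/(1-\<rho>^2)^3"
    "0 \<le> 1 - c + d" "1 - c + d \<le> (1+\<rho>)^2"
proof -
  have "\<bar>d\<bar> \<le> \<rho>^2 \<and> \<rho>*\<bar>c\<bar> \<le> \<rho>^2 + d"
  proof (rule root_constraints[OF r(1)])
    fix z :: complex assume "z^2 - of_real c * z + of_real d = 0"
    then have "cplx_eigenvalue (momA \<alpha> \<beta> \<gamma> Q) z" unfolding c_def d_def by (intro eigen_to_A[OF u])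
    then show "cmod z \<le> \<rho>" using spectral_rad_ge sr by fastforce
  qed
  then show "1 + d > 0" "1 - d > 0" "(1+d)^2 - c^2 > 0"
    "(1+d)/((1-d)*((1+d)^2-c^2)) \<le> (1+\<rho>^2)/(1-\<rho>^2)^3"
    "0 \<le> 1 - c + d" "1 - c + d \<le> (1+\<rho>)^2" using cd_bounds[OF r] by auto
qed

fun lin2 :: "real \<Rightarrow> real \<Rightarrow> real \<Rightarrow> real \<Rightarrow> nat \<Rightarrow> real" where
  "lin2 c d a0 a1 0 = a0"
| "lin2 c d a0 a1 (Suc 0) = a1"
| "lin2 c d a0 a1 (Suc (Suc n)) = c * lin2 c d a0 a1 (Suc n) - d * lin2 c d a0 a1 n"

lemma lin2_rec: "lin2 c d a0 a1 (t+2) = c * lin2 c d a0 a1 (t+1) - d * lin2 c d a0 a1 t"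
  by (simp add: numeral_2_eq_2)

lemma two_step_induct:
  assumes "P 0" "P 1" "\<And>k. P k \<Longrightarrow> P (Suc k) \<Longrightarrow> P (Suc (Suc k))"
  shows "P n"
proof -
  have "P n \<and> P (Suc n)" by (induction n) (use assms in auto)
  then show ?thesis by simp
qed

lemma noise_rep:
  fixes y \<xi> :: "nat \<Rightarrow> 'a \<Rightarrow> real"
  assumes rec: "\<And>t \<omega>. y (t+2) \<omega> = c * y (t+1) \<omega> - d * y t \<omega> + s * \<xi> t \<omega>"
    and y0: "\<And>\<omega>. y 0 \<omega> = a0" and y1: "\<And>\<omega>. y 1 \<omega> = a1"
  shows "y k \<omega> = lin2 c d a0 a1 k + s * (\<Sum>j<k. lin2 c d 0 1 (k-1-j) * \<xi> j \<omega>)"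
proof (induction k rule: two_step_induct)
  case 1 show ?case using y0 by simp
next
  case 2 show ?case using y1 by simp
next
  case (3 k)
  define H where "H = lin2 c d 0 1"
  have Z: "(\<Sum>j<Suc (Suc k). H (Suc (Suc k)-1-j) * \<xi> j \<omega>) =
     c * (\<Sum>j<Suc k. H (Suc k-1-j) * \<xi> j \<omega>) - d * (\<Sum>j<k. H (k-1-j) * \<xi> j \<omega>) + \<xi> k \<omega>"
  proof -
    have "(\<Sum>j<Suc (Suc k). H (Suc (Suc k)-1-j) * \<xi> j \<omega>) = (\<Sum>j<k. H (Suc k - j) * \<xi> j \<omega>) + \<xi> k \<omega>"
      by (simp add: H_def)
    also have "(\<Sum>j<k. H (Suc k - j) * \<xi> j \<omega>) = (\<Sum>j<k. c * (H (k - j) * \<xi> j \<omega>) - d * (H (k-1-j) * \<xi> j \<omega>))"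
    proof (rule sum.cong)
      fix j assume "j \<in> {..<k}"
      then have e: "Suc k - j = Suc (Suc (k-1-j))" "k - j = Suc (k-1-j)" by auto
      show "H (Suc k - j) * \<xi> j \<omega> = c * (H (k - j) * \<xi> j \<omega>) - d * (H (k-1-j) * \<xi> j \<omega>)"
        unfolding e H_def by (simp add: algebra_simps)
    qed simp
    also have "\<dots> = c * (\<Sum>j<Suc k. H (Suc k-1-j) * \<xi> j \<omega>) - d * (\<Sum>j<k. H (k-1-j) * \<xi> j \<omega>)"
      by (simp add: sum_subtractf sum_distrib_left H_def)
    finally show ?thesis .
  qed
  have "y (Suc (Suc k)) \<omega> = c * y (Suc k) \<omega> - d * y k \<omega> + s * \<xi> k \<omega>" using rec[of k \<omega>] by (simp add: numeral_2_eq_2)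
  also have "\<dots> = lin2 c d a0 a1 (Suc (Suc k)) + s * (\<Sum>j<Suc (Suc k). H (Suc (Suc k)-1-j) * \<xi> j \<omega>)"
    unfolding Z using 3 by (simp add: H_def algebra_simps)
  finally show ?case by (simp add: H_def)
qed

lemma (in prob_space) scalar_noise:
  fixes \<xi> y :: "nat \<Rightarrow> 'a \<Rightarrow> real"
  assumes xi1: "\<And>t. integrable M (\<xi> t)" "\<And>t. expectation (\<xi> t) = 0"
    and xi2: "\<And>t u. integrable M (\<lambda>\<omega>. \<xi> t \<omega> * \<xi> u \<omega>)"
       "\<And>t u. expectation (\<lambda>\<omega>. \<xi> t \<omega> * \<xi> u \<omega>) = (if t = u then 1 else 0)"
    and yrep: "\<And>\<omega>. y k \<omega> = G + s * (\<Sum>j<k. H (k-1-j) * \<xi> j \<omega>)"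
  shows "integrable M (\<lambda>\<omega>. (y k \<omega>)^2)" "expectation (\<lambda>\<omega>. (y k \<omega>)^2) = G^2 + s^2 * (\<Sum>t<k. (H t)^2)"
proof -
  define Z where "Z = (\<lambda>\<omega>. \<Sum>j<k. H (k-1-j) * \<xi> j \<omega>)"
  have Z2: "(Z \<omega>)^2 = (\<Sum>j<k. \<Sum>l<k. (H (k-1-j) * H (k-1-l)) * (\<xi> j \<omega> * \<xi> l \<omega>))" for \<omega>
    unfolding Z_def power2_eq_square sum_product by (simp add: algebra_simps)
  have iZ: "integrable M Z" unfolding Z_def using xi1 by auto
  have eZ: "expectation Z = 0" unfolding Z_def using xi1 by (simp add: integral_sum)
  have iZ2: "integrable M (\<lambda>\<omega>. (Z \<omega>)^2)" unfolding Z2 using xi2 by auto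
  have "expectation (\<lambda>\<omega>. (Z \<omega>)^2) = (\<Sum>j<k. \<Sum>l<k. (H (k-1-j) * H (k-1-l)) * (if j = l then 1 else 0))"
    unfolding Z2 using xi2 by (simp add: integral_sum)
  also have "\<dots> = (\<Sum>j<k. (H (k-1-j))^2)" by (simp add: power2_eq_square if_distrib cong: if_cong)
  also have "\<dots> = (\<Sum>t<k. (H t)^2)"
  proof -
    have "(\<Sum>j<k. (H (k-1-j))^2) = (\<Sum>j<k. (H (k - Suc j))^2)" by simp
    also have "\<dots> = (\<Sum>t<k. (H t)^2)" by (rule sum.nat_diff_reindex)
    finally show ?thesis .
  qed
  finally have eZ2: "expectation (\<lambda>\<omega>. (Z \<omega>)^2) = (\<Sum>t<k. (H t)^2)" .
  have ysq: "(y k \<omega>)^2 = G^2 + (2*G * s) * Z \<omega> + s^2 * (Z \<omega>)^2" for \<omega>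
  proof -
    have "y k \<omega> = G + s * Z \<omega>" using yrep unfolding Z_def by simp
    then show ?thesis by (simp add: power2_eq_square algebra_simps)
  qed
  show "integrable M (\<lambda>\<omega>. (y k \<omega>)^2)" unfolding ysq using iZ iZ2 by auto
  have i1: "integrable M (\<lambda>\<omega>. G^2 + (2*G * s) * Z \<omega>)" using iZ by auto
  have i2: "integrable M (\<lambda>\<omega>. s^2 * (Z \<omega>)^2)" using iZ2 by auto
  have "expectation (\<lambda>\<omega>. (y k \<omega>)^2) = expectation (\<lambda>\<omega>. G^2 + (2*G * s) * Z \<omega>) + expectation (\<lambda>\<omega>. s^2 * (Z \<omega>)^2)"
    unfolding ysq by (rule Bochner_Integration.integral_add[OF i1 i2])
  also have "expectation (\<lambda>\<omega>. G^2 + (2*G * s) * Z \<omega>) = expectation (\<lambda>\<omega>. G^2) + expectation (\<lambda>\<omega>. (2*G * s) * Z \<omega>)"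
    by (rule Bochner_Integration.integral_add) (use iZ in auto)
  also have "\<dots> + expectation (\<lambda>\<omega>. s^2 * (Z \<omega>)^2) = G^2 + s^2 * (\<Sum>t<k. (H t)^2)" using eZ eZ2 prob_space by simp
  finally show "expectation (\<lambda>\<omega>. (y k \<omega>)^2) = G^2 + s^2 * (\<Sum>t<k. (H t)^2)" .
qed

lemma cesaro0:
  fixes b :: "nat \<Rightarrow> real"
  assumes "b \<longlonglongrightarrow> 0"
  shows "(\<lambda>t. (\<Sum>k\<le>t. b k) / real t) \<longlonglongrightarrow> 0"
proof (rule LIMSEQ_I)
  fix r :: real assume r: "r > 0"
  obtain N where N: "\<And>k. k \<ge> N \<Longrightarrow> norm (b k) < r/4"
    using LIMSEQ_D[OF assms, of "r/4"] r by auto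
  define C where "C = (\<Sum>k<N. \<bar>b k\<bar>)"
  obtain M where M: "4*C/r + 1 < real M" using reals_Archimedean2 by blast
  show "\<exists>no. \<forall>t\<ge>no. norm ((\<Sum>k\<le>t. b k) / real t - 0) < r"
  proof (intro exI allI impI)
    fix t assume t: "max (max N M) 1 \<le> t"
    have tpos: "real t > 0" using t by simp
    have "\<bar>\<Sum>k\<le>t. b k\<bar> \<le> (\<Sum>k\<le>t. \<bar>b k\<bar>)" by (rule sum_abs)
    also have "\<dots> \<le> (\<Sum>k\<le>t. (if k < N then \<bar>b k\<bar> else 0) + r/4)"
    proof (rule sum_mono)
      fix k assume "k \<in> {..t}"
      show "\<bar>b k\<bar> \<le> (if k < N then \<bar>b k\<bar> else 0) + r/4"
      proof (cases "k < N")
        case True then show ?thesis using r by simp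
      next
        case False then show ?thesis using N[of k] by simp
      qed
    qed
    also have "\<dots> = (\<Sum>k\<le>t. (if k \<in> {..<N} then \<bar>b k\<bar> else 0)) + real (Suc t) * (r/4)"
      by (simp add: sum.distrib)
    also have "(\<Sum>k\<le>t. (if k \<in> {..<N} then \<bar>b k\<bar> else 0)) = C"
      unfolding C_def by (subst sum.inter_restrict[symmetric]) (use t in \<open>auto intro!: sum.cong\<close>)
    finally have s: "\<bar>\<Sum>k\<le>t. b k\<bar> \<le> C + real (Suc t) * (r/4)" .
    have "C \<ge> 0" unfolding C_def by (simp add: sum_nonneg)
    have "4*C/r < real t" using M t by linarith
    then have "C < real t * r / 4" using r by (simp add: field_simps)
    moreover have "real (Suc t) * (r/4) \<le> real t * r / 2" using t r by (simp add: field_simps)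
    ultimately have "\<bar>\<Sum>k\<le>t. b k\<bar> < real t * r" using s r tpos by linarith
    then show "norm ((\<Sum>k\<le>t. b k) / real t - 0) < r" using tpos by (simp add: field_simps)
  qed
qed

lemma cesaro:
  fixes a :: "nat \<Rightarrow> real"
  assumes "a \<longlonglongrightarrow> l"
  shows "(\<lambda>t. 1 / real t * (\<Sum>k\<le>t. a k)) \<longlonglongrightarrow> l"
proof -
  have b: "(\<lambda>k. a k - l) \<longlonglongrightarrow> 0" using tendsto_diff[OF assms tendsto_const[of l]] by simp
  have lim: "(\<lambda>t. (\<Sum>k\<le>t. a k - l) / real t + (real (Suc t) / real t) * l) \<longlonglongrightarrow> 0 + 1 * l"
    by (intro tendsto_add tendsto_mult cesaro0[OF b] LIMSEQ_Suc_n_over_n tendsto_const)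
  have ev: "eventually (\<lambda>t. (\<Sum>k\<le>t. a k - l) / real t + (real (Suc t) / real t) * l = 1 / real t * (\<Sum>k\<le>t. a k)) sequentially"
  proof (rule eventually_sequentiallyI[of 1])
    fix t :: nat assume "1 \<le> t"
    then show "(\<Sum>k\<le>t. a k - l) / real t + (real (Suc t) / real t) * l = 1 / real t * (\<Sum>k\<le>t. a k)"
      by (simp add: sum_subtractf field_simps)
  qed
  show ?thesis using Lim_transform_eventually[OF lim ev] by simp
qed

lemma xi_props:
  fixes w :: "nat \<Rightarrow> 'w \<Rightarrow> real^'n" and b :: "real^'n"
  assumes w_mean: "\<forall>t i. integrable M (\<lambda>\<omega>. w t \<omega> $ i) \<and> integral\<^sup>L M (\<lambda>\<omega>. w t \<omega> $ i) = 0"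
    and w_cov: "\<forall>t s i j. integrable M (\<lambda>\<omega>. w t \<omega> $ i * w s \<omega> $ j) \<and>
                  integral\<^sup>L M (\<lambda>\<omega>. w t \<omega> $ i * w s \<omega> $ j) = (if t = s \<and> i = j then 1 else 0)"
    and nb: "norm b = 1"
  shows "integrable M (\<lambda>\<omega>. b \<bullet> w t \<omega>)" "integral\<^sup>L M (\<lambda>\<omega>. b \<bullet> w t \<omega>) = 0"
    "integrable M (\<lambda>\<omega>. (b \<bullet> w t \<omega>) * (b \<bullet> w u \<omega>))"
    "integral\<^sup>L M (\<lambda>\<omega>. (b \<bullet> w t \<omega>) * (b \<bullet> w u \<omega>)) = (if t = u then 1 else 0)"
proof -
  have e1: "b \<bullet> w t \<omega> = (\<Sum>i\<in>UNIV. b$i * w t \<omega> $ i)" for t \<omega> by (simp add: inner_vec_def)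
  show "integrable M (\<lambda>\<omega>. b \<bullet> w t \<omega>)" unfolding e1 using w_mean by auto
  show "integral\<^sup>L M (\<lambda>\<omega>. b \<bullet> w t \<omega>) = 0" unfolding e1 using w_mean by (simp add: integral_sum)
  have e2: "(b \<bullet> w t \<omega>) * (b \<bullet> w u \<omega>) = (\<Sum>i\<in>UNIV. \<Sum>j\<in>UNIV. (b$i * b$j) * (w t \<omega> $ i * w u \<omega> $ j))" for \<omega>
    unfolding e1 sum_product by (simp add: algebra_simps)
  show "integrable M (\<lambda>\<omega>. (b \<bullet> w t \<omega>) * (b \<bullet> w u \<omega>))" unfolding e2 using w_cov by auto
  have "integral\<^sup>L M (\<lambda>\<omega>. (b \<bullet> w t \<omega>) * (b \<bullet> w u \<omega>)) =
     (\<Sum>i\<in>UNIV. \<Sum>j\<in>UNIV. (b$i * b$j) * (if t = u \<and> i = j then 1 else 0))"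
    unfolding e2 using w_cov by (simp add: integral_sum)
  also have "\<dots> = (if t = u then (\<Sum>i\<in>UNIV. b$i * b$i) else 0)"
  proof (cases "t = u")
    case True
    have "(\<Sum>i\<in>UNIV. \<Sum>j\<in>UNIV. (b$i * b$j) * (if t = u \<and> i = j then 1 else 0)) = (\<Sum>i\<in>UNIV. \<Sum>j\<in>UNIV. (if i = j then b$i * b$j else 0))"
      using True by (intro sum.cong refl) auto
    also have "\<dots> = (\<Sum>i\<in>UNIV. b$i * b$i)" by simp
    finally show ?thesis using True by simp
  qed simp
  also have "(\<Sum>i\<in>UNIV. b$i * b$i) = b \<bullet> b" by (simp add: inner_vec_def)
  also have "b \<bullet> b = 1" using nb by (simp add: dot_square_norm)
  finally show "integral\<^sup>L M (\<lambda>\<omega>. (b \<bullet> w t \<omega>) * (b \<bullet> w u \<omega>)) = (if t = u then 1 else 0)" by simp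
qed

lemma norm_sq_basis:
  fixes e :: "real^'n"
  assumes "(\<Sum>b\<in>B. (e \<bullet> b) *\<^sub>R b) = e"
  shows "(norm e)^2 = (\<Sum>b\<in>B. (b \<bullet> e)^2)"
proof -
  have "(norm e)^2 = e \<bullet> e" by (simp add: dot_square_norm)
  also have "\<dots> = e \<bullet> (\<Sum>b\<in>B. (e \<bullet> b) *\<^sub>R b)" using assms by simp
  also have "\<dots> = (\<Sum>b\<in>B. (b \<bullet> e)^2)" by (simp add: inner_sum_right power2_eq_square inner_commute)
  finally show ?thesis .
qed

theorem theorem1:
  fixes m L \<alpha> \<beta> \<gamma> \<rho> \<sigma> \<sigma>w :: real
    and Q :: "real^'n^'n" and q xs x0 x1 :: "real^'n"
    and M :: "'w measure" and w :: "nat \<Rightarrow> 'w \<Rightarrow> real^'n" and x :: "nat \<Rightarrow> 'w \<Rightarrow> real^'n"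
  assumes mL: "0 < m" "m \<le> L"
    and rho: "0 < \<rho>" "\<rho> < 1"
    and conv: "\<forall>Q' :: real^'n^'n. in_QmL m L Q' \<longrightarrow> spectral_rad (momA \<alpha> \<beta> \<gamma> Q') \<le> \<rho>"
    and fQ: "in_QmL m L Q"
    and xs_min: "\<forall>y. quad_f Q q xs \<le> quad_f Q q y"
    and sigma: "0 < \<sigma>" "\<sigma>w = \<sigma> \<or> \<sigma>w = \<alpha> * \<sigma>"
    and P: "prob_space M"
    and w_meas: "\<forall>t. w t \<in> borel_measurable M"
    and w_mean: "\<forall>t i. integrable M (\<lambda>\<omega>. w t \<omega> $ i) \<and> integral\<^sup>L M (\<lambda>\<omega>. w t \<omega> $ i) = 0"
    and w_cov: "\<forall>t s i j. integrable M (\<lambda>\<omega>. w t \<omega> $ i * w s \<omega> $ j) \<and>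
                  integral\<^sup>L M (\<lambda>\<omega>. w t \<omega> $ i * w s \<omega> $ j) = (if t = s \<and> i = j then 1 else 0)"
    and x0: "\<forall>\<omega>. x 0 \<omega> = x0" and x1: "\<forall>\<omega>. x 1 \<omega> = x1"
    and xrec: "\<forall>t \<omega>. x (t + 2) \<omega> = x (t + 1) \<omega> + \<beta> *\<^sub>R (x (t + 1) \<omega> - x t \<omega>)
        - \<alpha> *\<^sub>R (Q *v (x (t + 1) \<omega> + \<gamma> *\<^sub>R (x (t + 1) \<omega> - x t \<omega>)) - q) + \<sigma>w *\<^sub>R w t \<omega>"
  shows "noise_amplification M x xs
           \<le> \<sigma>w\<^sup>2 * (1 + \<rho>\<^sup>2) / (1 + \<rho>) ^ 3 * real CARD('n) * (1 / (1 - \<rho>)) ^ 3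
    \<and> (\<sigma>w = \<alpha> * \<sigma> \<longrightarrow> noise_amplification M x xs
           \<le> \<sigma>\<^sup>2 * (1 + \<rho>) * (1 + \<rho>\<^sup>2) / L\<^sup>2 * real CARD('n) * (1 / (1 - \<rho>)) ^ 3)"
proof -
  have sym: "transpose Q = Q" using fQ unfolding in_QmL_def by blast
  have qxs: "Q *v xs = q" by (rule quad_min_grad[OF sym xs_min])
  have sr: "spectral_rad (momA \<alpha> \<beta> \<gamma> Q) \<le> \<rho>" using conv fQ by blast
  obtain B where Bfin: "finite B" and Bcard: "card B \<le> CARD('n)" and Bort: "pairwise orthogonal B"
    and Bn: "\<And>b. b \<in> B \<Longrightarrow> norm b = 1"
    and Beig: "\<And>b. b \<in> B \<Longrightarrow> Q *v b = (b \<bullet> (Q *v b)) *\<^sub>R b"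
    and Bexp: "\<And>x. (\<Sum>b\<in>B. (x \<bullet> b) *\<^sub>R b) = x"
    using sym_eigenbasis[OF sym] by blast
  define lam where "lam b = b \<bullet> (Q *v b)" for b
  define cc where "cc b = 1 + \<beta> - (1+\<gamma>)*\<alpha>*lam b" for b
  define dd where "dd b = \<beta> - \<gamma>*\<alpha>*lam b" for b
  define G where "G b = lin2 (cc b) (dd b) (b \<bullet> (x0 - xs)) (b \<bullet> (x1 - xs))" for b
  define H where "H b = lin2 (cc b) (dd b) 0 1" for b
  define y where "y b k \<omega> = b \<bullet> (x k \<omega> - xs)" for b k \<omega>
  define \<xi> where "\<xi> b t \<omega> = b \<bullet> w t \<omega>" for b t \<omega>
  define Bd where "Bd = (1+\<rho>^2)/(1-\<rho>^2)^3"
  have cons: "1 + dd b > 0" "1 - dd b > 0" "(1+dd b)^2 - (cc b)^2 > 0"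
    "(1+dd b)/((1-dd b)*((1+dd b)^2-(cc b)^2)) \<le> Bd" if "b \<in> B" for b
  proof -
    have "b \<noteq> 0" using Bn[OF that] by auto
    then show "1 + dd b > 0" "1 - dd b > 0" "(1+dd b)^2 - (cc b)^2 > 0"
      "(1+dd b)/((1-dd b)*((1+dd b)^2-(cc b)^2)) \<le> Bd"
      using eig_constraints[OF _ Beig[OF that] rho sr] unfolding cc_def dd_def lam_def Bd_def by auto
  qed
  have Qin: "b \<bullet> (Q *v v) = lam b * (b \<bullet> v)" if "b \<in> B" for b v
  proof -
    have "b \<bullet> (Q *v v) = (Q *v b) \<bullet> v" by (rule sym_inner[OF sym])
    also have "\<dots> = lam b * (b \<bullet> v)" using Beig[OF that] unfolding lam_def by (metis inner_scaleR_left)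
    finally show ?thesis .
  qed
  have yrec: "y b (t+2) \<omega> = cc b * y b (t+1) \<omega> - dd b * y b t \<omega> + \<sigma>w * \<xi> b t \<omega>" if "b \<in> B" for b t \<omega>
  proof -
    define e1 where "e1 = x (t+1) \<omega> - xs"
    define e0 where "e0 = x t \<omega> - xs"
    have "Q *v (x (t + 1) \<omega> + \<gamma> *\<^sub>R (x (t + 1) \<omega> - x t \<omega>)) - q = Q *v (e1 + \<gamma> *\<^sub>R (e1 - e0))"
      unfolding e1_def e0_def qxs[symmetric] by (simp add: matrix_vector_mult_diff_distrib[symmetric] algebra_simps)
    then have "x (t+2) \<omega> - xs = e1 + \<beta> *\<^sub>R (e1 - e0) - \<alpha> *\<^sub>R (Q *v (e1 + \<gamma> *\<^sub>R (e1 - e0))) + \<sigma>w *\<^sub>R w t \<omega>"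
      using xrec unfolding e1_def e0_def by (simp add: algebra_simps)
    then have "y b (t+2) \<omega> = b \<bullet> e1 + \<beta> * (b \<bullet> e1 - b \<bullet> e0) - \<alpha> * (lam b * (b \<bullet> e1 + \<gamma> * (b \<bullet> e1 - b \<bullet> e0))) + \<sigma>w * \<xi> b t \<omega>"
      unfolding y_def \<xi>_def using Qin[OF that] by (simp add: inner_add_right inner_diff_right)
    moreover have "y b (t+1) \<omega> = b \<bullet> e1" "y b t \<omega> = b \<bullet> e0" unfolding y_def e1_def e0_def by auto
    ultimately show ?thesis unfolding cc_def dd_def by (simp add: algebra_simps)
  qed
  have yrep: "y b k \<omega> = G b k + \<sigma>w * (\<Sum>j<k. H b (k-1-j) * \<xi> b j \<omega>)" if "b \<in> B" for b k \<omega>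
    unfolding G_def H_def
    by (rule noise_rep[where y="y b"]) (use yrec[OF that] x0 x1 in \<open>auto simp: y_def\<close>)
  have Ey: "integrable M (\<lambda>\<omega>. (y b k \<omega>)^2)"
    "integral\<^sup>L M (\<lambda>\<omega>. (y b k \<omega>)^2) = (G b k)^2 + \<sigma>w^2 * (\<Sum>t<k. (H b t)^2)" if "b \<in> B" for b k
    using prob_space.scalar_noise[OF P, where \<xi>="\<xi> b" and y="y b" and k=k and G="G b k" and s=\<sigma>w and H="H b"]
      xi_props[OF w_mean w_cov Bn[OF that]] yrep[OF that] unfolding \<xi>_def by auto
  define a where "a k = (\<Sum>b\<in>B. (G b k)^2 + \<sigma>w^2 * (\<Sum>t<k. (H b t)^2))" for k
  have Ea: "integral\<^sup>L M (\<lambda>\<omega>. (norm (x k \<omega> - xs))\<^sup>2) = a k" for k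
  proof -
    have "(\<lambda>\<omega>. (norm (x k \<omega> - xs))\<^sup>2) = (\<lambda>\<omega>. \<Sum>b\<in>B. (y b k \<omega>)^2)"
      unfolding y_def using norm_sq_basis[OF Bexp] by auto
    then show ?thesis unfolding a_def using Ey by (simp add: integral_sum)
  qed
  define S where "S b = (\<Sum>t. (H b t)^2)" for b
  have Hs: "summable (\<lambda>t. (H b t)^2)" "S b \<le> Bd" if "b \<in> B" for b
  proof -
    have rec: "\<And>t. H b (t+2) = cc b * H b (t+1) - dd b * H b t" unfolding H_def by (rule lin2_rec)
    show "summable (\<lambda>t. (H b t)^2)" using lyap_summable(1)[OF rec cons(1-3)[OF that]] .
    have "S b \<le> WL (cc b) (dd b) (H b 0) (H b 1) / ((1-dd b)*((1+dd b)^2-(cc b)^2))"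
      unfolding S_def using lyap_summable(2)[OF rec cons(1-3)[OF that]] .
    also have "WL (cc b) (dd b) (H b 0) (H b 1) = 1 + dd b" unfolding H_def WL_def by simp
    finally show "S b \<le> Bd" using cons(4)[OF that] by simp
  qed
  have Gz: "(\<lambda>k. (G b k)^2) \<longlonglongrightarrow> 0" if "b \<in> B" for b
  proof -
    have rec: "\<And>t. G b (t+2) = cc b * G b (t+1) - dd b * G b t" unfolding G_def by (rule lin2_rec)
    show ?thesis using summable_LIMSEQ_zero[OF lyap_summable(1)[OF rec cons(1-3)[OF that]]] .
  qed
  define J where "J = (\<Sum>b\<in>B. 0 + \<sigma>w^2 * S b)"
  have alim: "a \<longlonglongrightarrow> J"
    unfolding a_def J_def S_def
    by (intro tendsto_sum tendsto_add tendsto_mult tendsto_const Gz summable_LIMSEQ Hs)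
  have NA: "noise_amplification M x xs = J"
  proof -
    have "(\<lambda>t. 1 / real t * (\<Sum>k\<le>t. integral\<^sup>L M (\<lambda>\<omega>. (norm (x k \<omega> - xs))\<^sup>2))) = (\<lambda>t. 1 / real t * (\<Sum>k\<le>t. a k))"
      using Ea by simp
    then show ?thesis unfolding noise_amplification_def using cesaro[OF alim] by (simp add: limI)
  qed
  have JB: "J \<le> real CARD('n) * (\<sigma>w^2 * Bd)"
  proof -
    have "J \<le> (\<Sum>b\<in>B. \<sigma>w^2 * Bd)" unfolding J_def
    proof (rule sum_mono)
      fix b assume "b \<in> B"
      then have "S b \<le> Bd" by (rule Hs(2))
      then show "0 + \<sigma>w^2 * S b \<le> \<sigma>w^2 * Bd" by (simp add: mult_left_mono)
    qed
    also have "\<dots> = real (card B) * (\<sigma>w^2 * Bd)" by simp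
    also have "\<dots> \<le> real CARD('n) * (\<sigma>w^2 * Bd)"
    proof (rule mult_right_mono)
      show "real (card B) \<le> real CARD('n)" using Bcard by simp
      have "1 - \<rho>^2 > 0" using rho by (simp add: power_less_one_iff)
      then show "0 \<le> \<sigma>w^2 * Bd" unfolding Bd_def by simp
    qed
    finally show ?thesis .
  qed
  have Bd_eq: "Bd = (1 + \<rho>\<^sup>2) / (1 + \<rho>) ^ 3 * (1 / (1 - \<rho>)) ^ 3"
  proof -
    have "(1-\<rho>^2)^3 = (1+\<rho>)^3 * (1-\<rho>)^3" by (simp add: power2_eq_square power_mult_distrib[symmetric] algebra_simps)
    then show ?thesis unfolding Bd_def by (simp add: power_one_over)
  qed
  have part1: "noise_amplification M x xs \<le> \<sigma>w\<^sup>2 * (1 + \<rho>\<^sup>2) / (1 + \<rho>) ^ 3 * real CARD('n) * (1 / (1 - \<rho>)) ^ 3"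
    using NA JB unfolding Bd_eq by (simp add: algebra_simps)
  have part2: "noise_amplification M x xs \<le> \<sigma>\<^sup>2 * (1 + \<rho>) * (1 + \<rho>\<^sup>2) / L\<^sup>2 * real CARD('n) * (1 / (1 - \<rho>)) ^ 3"
    if gm: "\<sigma>w = \<alpha> * \<sigma>"
  proof -
    obtain u where u: "u \<noteq> 0" "Q *v u = L *s u" using fQ unfolding in_QmL_def real_eigenvalue_def by blast
    have u': "Q *v u = L *\<^sub>R u" using u(2) by (simp add: scalar_mult_eq_scaleR)
    have h: "0 \<le> \<alpha> * L" "\<alpha> * L \<le> (1+\<rho>)^2"
      using eig_constraints(5,6)[OF u(1) u' rho sr] by (simp_all add: algebra_simps)
    have Lpos: "L > 0" using mL by simp
    have "(\<alpha> * L)^2 \<le> ((1+\<rho>)^2)^2" using h by (intro power_mono) auto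
    then have a2: "\<alpha>^2 * L^2 \<le> (1+\<rho>)^4" by (simp add: power_mult_distrib power_mult[symmetric])
    have Bd0: "Bd \<ge> 0"
    proof -
      have "1 - \<rho>^2 > 0" using rho by (simp add: power_less_one_iff)
      then show ?thesis unfolding Bd_def by simp
    qed
    have "noise_amplification M x xs \<le> real CARD('n) * (\<alpha>^2 * \<sigma>^2 * Bd)"
      using NA JB gm by (simp add: power_mult_distrib)
    also have "\<alpha>^2 * \<sigma>^2 * Bd \<le> ((1+\<rho>)^4 / L^2) * \<sigma>^2 * Bd"
    proof (intro mult_right_mono Bd0)
      show "\<alpha>^2 \<le> (1+\<rho>)^4 / L^2" using a2 Lpos by (simp add: field_simps)
    qed simp
    then have "real CARD('n) * (\<alpha>^2 * \<sigma>^2 * Bd) \<le> real CARD('n) * (((1+\<rho>)^4 / L^2) * \<sigma>^2 * Bd)"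
      by (intro mult_left_mono) auto
    also have "((1+\<rho>)^4 / L^2) * \<sigma>^2 * Bd = \<sigma>\<^sup>2 * (1 + \<rho>) * (1 + \<rho>\<^sup>2) / L\<^sup>2 * (1 / (1 - \<rho>)) ^ 3"
    proof -
      have "(1+\<rho>)^4 = (1+\<rho>) * (1+\<rho>)^3" by (simp add: power_Suc[symmetric] eval_nat_numeral)
      moreover have "(1 + \<rho>)^3 > 0" using rho by simp
      moreover have "1 - \<rho> \<noteq> 0" "L \<noteq> 0" using rho Lpos by auto
      ultimately show ?thesis unfolding Bd_eq by (simp add: field_simps)
    qed
    finally show ?thesis by (simp add: algebra_simps)
  qed
  show ?thesis using part1 part2 by blast
qed


end
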